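(* Let $\overline{C}(\alpha)$, $0\le\alpha\le 2$, be as defined in the context. Then: (1) For real $0\le\alpha\le2$, $\overline{C}(\alpha)=\overline{C}(2-\alpha)>0$. (2) For real $0\le\alpha_1<\alpha_2\le2$ and $0<\theta<1$, $\overline{C}(\theta\alpha_1+(1-\theta)\alpha_2)\le\overline{C}(\alpha_1)^{\theta}\,\overline{C}(\alpha_2)^{1-\theta}$. (3) For real $0\le\alpha_1<\alpha_2\le1$, $\overline{C}(\alpha_1)\ge\overline{C}(\alpha_2)$; consequently the minimum of $\overline{C}(\alpha)$ over $0\le\alpha\le2$ is attained at $\alpha=1$. (4) For real $0\le\alpha<\tfrac12$, $\overline{C}(\alpha)=\infty$.
   Context: For a strictly increasing sequence $(\lambda_k)_{k=-\infty}^{\infty}$ of real numbers, put $\delta_k:=\min\{\lambda_k-\lambda_{k-1},\lambda_{k+1}-\lambda_k\}$. For $0\le\alpha\le2$, let $\overline{C}(\alpha)$ be the minimum of all constants $C(\alpha)$ such that $$\sum_{m=1}^N\sum_{\substack{n=1\\ n\ne m}}^N\frac{\delta_m^{2-\alpha}\delta_n^{\alpha}t_mt_n}{(\lambda_m-\lambda_n)^2}\le C(\alpha)\sum_{n=1}^N t_n^2$$ holds for every positive integer $N$, every strictly increasing real sequence $(\lambda_k)_{k\in\mathbb Z}$ and all nonnegative reals $t_1,\dots,t_N$; set $\overline{C}(\alpha)=\infty$ if no such real constant exists (with the usual conventions for $\infty$ in the inequalities). *)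

theory Defs
  imports "HOL-Analysis.Analysis"
begin

definition gapdelta :: "(int \<Rightarrow> real) \<Rightarrow> int \<Rightarrow> real" where
  "gapdelta lam k = min (lam k - lam (k - 1)) (lam (k + 1) - lam k)"

definition admissible_const :: "real \<Rightarrow> real \<Rightarrow> bool" where
  "admissible_const \<alpha> C \<longleftrightarrow>
     (\<forall>(N::nat) (lam::int \<Rightarrow> real) (t::nat \<Rightarrow> real).
        N \<ge> 1 \<longrightarrow> strict_mono lam \<longrightarrow> (\<forall>n\<in>{1..N}. t n \<ge> 0) \<longrightarrow>
        (\<Sum>m\<in>{1..N}. \<Sum>n\<in>{1..N}-{m}.
            gapdelta lam (int m) powr (2 - \<alpha>) * gapdelta lam (int n) powr \<alpha> * t m * t n
            / (lam (int m) - lam (int n))^2)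
        \<le> C * (\<Sum>n\<in>{1..N}. (t n)^2))"

definition Cbar :: "real \<Rightarrow> ereal" where
  "Cbar \<alpha> = Inf (ereal ` {C. admissible_const \<alpha> C})"

end

theory Submission
  imports Defs
begin

lemma holder_sum:
  fixes x y :: "'a \<Rightarrow> real"
  assumes fin: "finite I" and x: "\<And>i. i \<in> I \<Longrightarrow> x i \<ge> 0" and y: "\<And>i. i \<in> I \<Longrightarrow> y i \<ge> 0"
    and th: "0 < \<theta>" "\<theta> < 1"
  shows "(\<Sum>i\<in>I. x i powr \<theta> * y i powr (1-\<theta>)) \<le> (\<Sum>i\<in>I. x i) powr \<theta> * (\<Sum>i\<in>I. y i) powr (1-\<theta>)"
proof -
  define X where "X = (\<Sum>i\<in>I. x i)"
  define Y where "Y = (\<Sum>i\<in>I. y i)"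
  have X0: "X \<ge> 0" unfolding X_def using x by (simp add: sum_nonneg)
  have Y0: "Y \<ge> 0" unfolding Y_def using y by (simp add: sum_nonneg)
  show ?thesis
  proof (cases "X = 0 \<or> Y = 0")
    case True
    then have "\<forall>i\<in>I. x i = 0 \<or> y i = 0"
      using sum_nonneg_eq_0_iff[OF fin] x y unfolding X_def Y_def by blast
    then have "(\<Sum>i\<in>I. x i powr \<theta> * y i powr (1-\<theta>)) = 0"
      by (intro sum.neutral) auto
    then show ?thesis using X0 Y0 X_def Y_def by simp
  next
    case False
    then have Xp: "X > 0" and Yp: "Y > 0" using X0 Y0 by auto
    have "x i powr \<theta> * y i powr (1-\<theta>) \<le> X powr \<theta> * Y powr (1-\<theta>) * (\<theta> * (x i / X) + (1-\<theta>) * (y i / Y))"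
      if i: "i \<in> I" for i
    proof (cases "x i = 0 \<or> y i = 0")
      case True
      then show ?thesis using x[OF i] y[OF i] Xp Yp th by auto
    next
      case False
      then have xp: "x i > 0" and yp: "y i > 0" using x[OF i] y[OF i] by auto
      have "(x i / X) powr \<theta> * (y i / Y) powr (1-\<theta>) \<le> \<theta> * (x i / X) + (1-\<theta>) * (y i / Y)"
        using Youngs_inequality_0[of \<theta> "1-\<theta>" "x i / X" "y i / Y"] th xp yp Xp Yp by auto
      moreover have "(x i / X) powr \<theta> * (y i / Y) powr (1-\<theta>) = x i powr \<theta> * y i powr (1-\<theta>) / (X powr \<theta> * Y powr (1-\<theta>))"
        using xp yp Xp Yp by (simp add: powr_divide)
      moreover have "X powr \<theta> * Y powr (1-\<theta>) > 0" using Xp Yp by simp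
      ultimately show ?thesis by (simp add: divide_le_eq mult.commute)
    qed
    then have "(\<Sum>i\<in>I. x i powr \<theta> * y i powr (1-\<theta>)) \<le> (\<Sum>i\<in>I. X powr \<theta> * Y powr (1-\<theta>) * (\<theta> * (x i / X) + (1-\<theta>) * (y i / Y)))"
      by (rule sum_mono)
    also have "\<dots> = X powr \<theta> * Y powr (1-\<theta>) * (\<theta> * (X / X) + (1-\<theta>) * (Y / Y))"
      by (simp add: sum_distrib_left sum.distrib sum_divide_distrib[symmetric] X_def Y_def flip: sum_distrib_left)
    also have "\<dots> = X powr \<theta> * Y powr (1-\<theta>)" using Xp Yp by simp
    finally show ?thesis by (simp add: X_def Y_def)
  qed
qed


definition SS :: "real \<Rightarrow> nat \<Rightarrow> (int \<Rightarrow> real) \<Rightarrow> (nat \<Rightarrow> real) \<Rightarrow> real" where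
  "SS \<alpha> N lam t = (\<Sum>m\<in>{1..N}. \<Sum>n\<in>{1..N}-{m}.
            gapdelta lam (int m) powr (2 - \<alpha>) * gapdelta lam (int n) powr \<alpha> * t m * t n
            / (lam (int m) - lam (int n))^2)"

lemma adm_iff: "admissible_const \<alpha> C \<longleftrightarrow>
  (\<forall>(N::nat) (lam::int \<Rightarrow> real) (t::nat \<Rightarrow> real).
        N \<ge> 1 \<longrightarrow> strict_mono lam \<longrightarrow> (\<forall>n\<in>{1..N}. t n \<ge> 0) \<longrightarrow>
        SS \<alpha> N lam t \<le> C * (\<Sum>n\<in>{1..N}. (t n)^2))"
  unfolding admissible_const_def SS_def by simp

lemma diff_sum: "finite I \<Longrightarrow> (\<Sum>n\<in>I-{m}. f n) = (\<Sum>n\<in>I. if n = m then 0 else f n)"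
  by (simp add: sum.If_cases Diff_eq Int_commute)

lemma SS_sym: "SS \<alpha> N lam t = SS (2 - \<alpha>) N lam t"
proof -
  have "SS \<alpha> N lam t = (\<Sum>m\<in>{1..N}. \<Sum>n\<in>{1..N}. if n = m then 0 else
     gapdelta lam (int m) powr (2 - \<alpha>) * gapdelta lam (int n) powr \<alpha> * t m * t n
            / (lam (int m) - lam (int n))^2)"
    unfolding SS_def by (simp add: diff_sum)
  also have "\<dots> = (\<Sum>n\<in>{1..N}. \<Sum>m\<in>{1..N}. if n = m then 0 else
     gapdelta lam (int m) powr (2 - \<alpha>) * gapdelta lam (int n) powr \<alpha> * t m * t n
            / (lam (int m) - lam (int n))^2)"
    by (rule sum.swap)
  also have "\<dots> = (\<Sum>n\<in>{1..N}. \<Sum>m\<in>{1..N}. if m = n then 0 else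
     gapdelta lam (int n) powr (2 - (2 - \<alpha>)) * gapdelta lam (int m) powr (2 - \<alpha>) * t n * t m
            / (lam (int n) - lam (int m))^2)"
    by (intro sum.cong refl) (auto simp: power2_commute mult_ac)
  also have "\<dots> = SS (2 - \<alpha>) N lam t"
    unfolding SS_def diff_sum[OF finite_atLeastAtMost] by (intro sum.cong refl; auto)
  finally show ?thesis .
qed

lemma adm_sym: "admissible_const \<alpha> C = admissible_const (2 - \<alpha>) C"
  unfolding adm_iff using SS_sym by metis

lemma Cbar_sym: "Cbar \<alpha> = Cbar (2 - \<alpha>)"
proof -
  have "{C. admissible_const \<alpha> C} = {C. admissible_const (2 - \<alpha>) C}" using adm_sym by blast
  then show ?thesis unfolding Cbar_def by simp
qed

lemma adm_ge1: assumes "admissible_const \<alpha> C" shows "C \<ge> 1"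
proof -
  have sm: "strict_mono (real_of_int)" by (simp add: strict_mono_def)
  have gd: "gapdelta real_of_int k = 1" for k by (simp add: gapdelta_def)
  have e: "{1..2::nat} = {1,2}" by auto
  have "SS \<alpha> 2 real_of_int (\<lambda>_. 1) \<le> C * (\<Sum>n\<in>{1..2::nat}. 1^2)"
    using assms[unfolded adm_iff, rule_format, of 2 real_of_int "\<lambda>_. 1"] sm by simp
  moreover have "SS \<alpha> 2 real_of_int (\<lambda>_. 1) = 2"
  proof -
    have e1: "{Suc 0..2}-{Suc 0} = {2}" and e2: "{Suc 0..2} - {2} = {Suc 0}" by auto
    have "SS \<alpha> 2 real_of_int (\<lambda>_. 1) = (\<Sum>m\<in>{1,2::nat}. \<Sum>n\<in>{1..2}-{m}. 1 / (real_of_int (int m) - real_of_int (int n))^2)"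
      unfolding SS_def gd e by simp
    also have "\<dots> = 2" by (simp add: e1 e2 e[symmetric])
    finally show ?thesis .
  qed
  ultimately show ?thesis by (simp add: e)
qed

lemma Cbar_ge1: "Cbar \<alpha> \<ge> 1"
  unfolding Cbar_def by (rule Inf_greatest) (auto dest: adm_ge1)

lemma Cbar_attained:
  assumes "Cbar \<alpha> \<noteq> \<infinity>"
  shows "Cbar \<alpha> = ereal (real_of_ereal (Cbar \<alpha>)) \<and> admissible_const \<alpha> (real_of_ereal (Cbar \<alpha>))"
proof -
  define c where "c = real_of_ereal (Cbar \<alpha>)"
  have ce: "Cbar \<alpha> = ereal c" 
  proof (cases "Cbar \<alpha>")
    case (real r) then show ?thesis unfolding c_def by simp
  next
    case PInf then show ?thesis using assms by simp
  next
    case MInf then show ?thesis using Cbar_ge1[of \<alpha>] by simp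
  qed
  have "admissible_const \<alpha> c"
    unfolding adm_iff
  proof (intro allI impI)
    fix N lam t assume h: "(N::nat) \<ge> 1" "strict_mono (lam::int\<Rightarrow>real)" "\<forall>n\<in>{1..N}. (t::nat\<Rightarrow>real) n \<ge> 0"
    define T where "T = (\<Sum>n\<in>{1..N}. (t n)^2)"
    have T0: "T \<ge> 0" unfolding T_def by (simp add: sum_nonneg)
    show "SS \<alpha> N lam t \<le> c * (\<Sum>n\<in>{1..N}. (t n)^2)"
    proof (rule ccontr)
      assume "\<not> ?thesis"
      then have lt: "c * T < SS \<alpha> N lam t" unfolding T_def by simp
      have hold: "SS \<alpha> N lam t \<le> C * T" if "admissible_const \<alpha> C" for C
        using that[unfolded adm_iff, rule_format, OF h(1) h(2)] h(3) unfolding T_def by blast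
      show False
      proof (cases "T = 0")
        case True
        have "{C. admissible_const \<alpha> C} \<noteq> {}"
        proof
          assume "{C. admissible_const \<alpha> C} = {}"
          then have "Cbar \<alpha> = Inf (ereal ` {})" unfolding Cbar_def by (simp only:)
          then have "Cbar \<alpha> = \<infinity>" by (simp add: top_ereal_def)
          then show False using assms by simp
        qed
        then obtain C0 where C0: "admissible_const \<alpha> C0" by auto
        show ?thesis using lt hold[OF C0] True by simp
      next
        case False
        then have Tp: "T > 0" using T0 by simp
        have "c < SS \<alpha> N lam t / T" using lt Tp by (simp add: field_simps)
        then have "Inf (ereal ` {C. admissible_const \<alpha> C}) < ereal (SS \<alpha> N lam t / T)"
          using ce unfolding Cbar_def by simp
        then obtain C where C: "admissible_const \<alpha> C" "C < SS \<alpha> N lam t / T"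
          by (auto simp: Inf_less_iff)
        then have "C * T < SS \<alpha> N lam t" using Tp by (simp add: field_simps)
        then show False using hold[OF C(1)] by simp
      qed
    qed
  qed
  then show ?thesis using ce by simp
qed


lemma term_interp:
  fixes p q a \<theta> :: real
  assumes "p > 0" "q > 0" "a \<ge> 0" "0 < \<theta>" "\<theta> < 1"
  shows "(p powr u * q powr v * a) powr \<theta> * (p powr u2 * q powr v2 * a) powr (1-\<theta>)
       = p powr (\<theta>*u+(1-\<theta>)*u2) * q powr (\<theta>* v+(1-\<theta>)* v2) * a"
proof (cases "a = 0")
  case True then show ?thesis by simp
next
  case False
  then have ap: "a > 0" using assms by simp
  have "(p powr u * q powr v * a) powr \<theta> * (p powr u2 * q powr v2 * a) powr (1-\<theta>)
     = (p powr (u*\<theta>) * p powr (u2*(1-\<theta>))) * (q powr (v *\<theta>) * q powr (v2*(1-\<theta>))) * (a powr \<theta> * a powr (1-\<theta>))"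
    using assms ap by (simp add: powr_mult powr_powr mult_ac)
  also have "\<dots> = p powr (\<theta>*u+(1-\<theta>)*u2) * q powr (\<theta>* v+(1-\<theta>)* v2) * a"
    using ap assms by (simp add: powr_add[symmetric] mult_ac)
  finally show ?thesis .
qed

lemma gap_pos: "strict_mono lam \<Longrightarrow> gapdelta lam k > 0"
  unfolding gapdelta_def using strict_monoD[of lam "k-1" k] strict_monoD[of lam k "k+1"] by simp

lemma term_nonneg: "strict_mono lam \<Longrightarrow> t m \<ge> 0 \<Longrightarrow> t n \<ge> 0 \<Longrightarrow>
  gapdelta lam (int m) powr (2 - \<alpha>) * gapdelta lam (int n) powr \<alpha> * t m * t n
            / (lam (int m) - lam (int n))^2 \<ge> 0"
  by simp

lemma SS_nonneg: "strict_mono lam \<Longrightarrow> (\<forall>n\<in>{1..N}. t n \<ge> 0) \<Longrightarrow> SS \<alpha> N lam t \<ge> 0"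
  unfolding SS_def by (intro sum_nonneg) (auto intro!: term_nonneg)

lemma SS_interp:
  assumes lam: "strict_mono lam" and t: "\<forall>n\<in>{1..N}. t n \<ge> 0" and th: "0 < \<theta>" "\<theta> < 1"
  shows "SS (\<theta>*a+(1-\<theta>)*b) N lam t \<le> SS a N lam t powr \<theta> * SS b N lam t powr (1-\<theta>)"
proof -
  define F where "F = (\<lambda>\<alpha> m n. gapdelta lam (int m) powr (2 - \<alpha>) * gapdelta lam (int n) powr \<alpha> * t m * t n
            / (lam (int m) - lam (int n))^2)"
  have SSF: "SS \<alpha> N lam t = (\<Sum>m\<in>{1..N}. \<Sum>n\<in>{1..N}-{m}. F \<alpha> m n)" for \<alpha>
    unfolding SS_def F_def ..
  have Fnn: "F \<alpha> m n \<ge> 0" if "m \<in> {1..N}" "n \<in> {1..N}" for \<alpha> m n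
    unfolding F_def using term_nonneg[OF lam] t that by auto
  have Fi: "F (\<theta>*a+(1-\<theta>)*b) m n = F a m n powr \<theta> * F b m n powr (1-\<theta>)"
    if "m \<in> {1..N}" "n \<in> {1..N}" for m n
  proof -
    have e: "F \<alpha> m n = gapdelta lam (int m) powr (2 - \<alpha>) * gapdelta lam (int n) powr \<alpha> * (t m * t n
            / (lam (int m) - lam (int n))^2)" for \<alpha>
      unfolding F_def by simp
    have "2 - (\<theta>*a+(1-\<theta>)*b) = \<theta>*(2-a) + (1-\<theta>)*(2-b)" by (simp add: algebra_simps)
    then show ?thesis unfolding e
      using term_interp[of "gapdelta lam (int m)" "gapdelta lam (int n)" "t m * t n / (lam (int m) - lam (int n))^2" \<theta> "2-a" a "2-b" b]
        gap_pos[OF lam] t that th by simp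
  qed
  have "SS (\<theta>*a+(1-\<theta>)*b) N lam t = (\<Sum>m\<in>{1..N}. \<Sum>n\<in>{1..N}-{m}. F a m n powr \<theta> * F b m n powr (1-\<theta>))"
    unfolding SSF by (intro sum.cong refl) (auto simp: Fi)
  also have "\<dots> \<le> (\<Sum>m\<in>{1..N}. (\<Sum>n\<in>{1..N}-{m}. F a m n) powr \<theta> * (\<Sum>n\<in>{1..N}-{m}. F b m n) powr (1-\<theta>))"
    by (intro sum_mono holder_sum th) (auto intro!: Fnn)
  also have "\<dots> \<le> SS a N lam t powr \<theta> * SS b N lam t powr (1-\<theta>)"
    unfolding SSF by (intro holder_sum th) (auto intro!: Fnn sum_nonneg)
  finally show ?thesis .
qed

lemma adm_interp:
  assumes A: "admissible_const a C1" and B: "admissible_const b C2" and C: "C1 \<ge> 0" "C2 \<ge> 0"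
    and th: "0 < \<theta>" "\<theta> < 1"
  shows "admissible_const (\<theta>*a+(1-\<theta>)*b) (C1 powr \<theta> * C2 powr (1-\<theta>))"
  unfolding adm_iff
proof (intro allI impI)
  fix N lam t assume h: "(N::nat) \<ge> 1" "strict_mono (lam::int\<Rightarrow>real)" "\<forall>n\<in>{1..N}. (t::nat\<Rightarrow>real) n \<ge> 0"
  define T where "T = (\<Sum>n\<in>{1..N}. (t n)^2)"
  have T0: "T \<ge> 0" unfolding T_def by (simp add: sum_nonneg)
  have s1: "SS a N lam t \<le> C1 * T"
    using A[unfolded adm_iff, rule_format, OF h(1) h(2)] h(3) unfolding T_def by blast
  have s2: "SS b N lam t \<le> C2 * T"
    using B[unfolded adm_iff, rule_format, OF h(1) h(2)] h(3) unfolding T_def by blast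
  have TT: "T powr \<theta> * T powr (1-\<theta>) = T"
  proof (cases "T = 0")
    case False then show ?thesis using T0 by (simp add: powr_add[symmetric])
  qed simp
  have "SS (\<theta>*a+(1-\<theta>)*b) N lam t \<le> SS a N lam t powr \<theta> * SS b N lam t powr (1-\<theta>)"
    by (rule SS_interp[OF h(2) h(3) th])
  also have "\<dots> \<le> (C1 * T) powr \<theta> * (C2 * T) powr (1-\<theta>)"
    using s1 s2 SS_nonneg[OF h(2) h(3)] th by (intro mult_mono powr_mono2) auto
  also have "\<dots> = C1 powr \<theta> * C2 powr (1-\<theta>) * (T powr \<theta> * T powr (1-\<theta>))"
    using C T0 by (simp add: powr_mult mult_ac)
  also have "\<dots> = C1 powr \<theta> * C2 powr (1-\<theta>) * T" by (simp add: TT)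
  finally show "SS (\<theta>*a+(1-\<theta>)*b) N lam t \<le> C1 powr \<theta> * C2 powr (1-\<theta>) * (\<Sum>n\<in>{1..N}. (t n)^2)"
    unfolding T_def .
qed


lemma no_adm:
  assumes a0: "0 \<le> \<alpha>" and a1: "\<alpha> < 1/2"
  shows "\<not> admissible_const \<alpha> C"
proof
  assume A: "admissible_const \<alpha> C"
  define b where "b = 1 - 2*\<alpha>"
  have bp: "b > 0" using a1 unfolding b_def by simp
  define j :: nat where "j = nat \<lceil>(8*\<bar>C\<bar>+1) powr (1/b)\<rceil> + 1"
  define x where "x = real j"
  have xgt: "x > (8*\<bar>C\<bar>+1) powr (1/b)"
  proof -
    have "real (nat \<lceil>(8*\<bar>C\<bar>+1) powr (1/b)\<rceil>) \<ge> (8*\<bar>C\<bar>+1) powr (1/b)"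
      by (rule real_nat_ceiling_ge)
    moreover have "x = real (nat \<lceil>(8*\<bar>C\<bar>+1) powr (1/b)\<rceil>) + 1" unfolding x_def j_def by simp
    ultimately show ?thesis by linarith
  qed
  have x1: "x \<ge> 1"
  proof -
    have "x = real (nat \<lceil>(8*\<bar>C\<bar>+1) powr (1/b)\<rceil>) + 1" unfolding x_def j_def by simp
    moreover have "real (nat \<lceil>(8*\<bar>C\<bar>+1) powr (1/b)\<rceil>) \<ge> 0" by (rule of_nat_0_le_iff)
    ultimately show ?thesis by linarith
  qed
  have xb: "x powr b > 8*\<bar>C\<bar>+1"
  proof -
    have "((8*\<bar>C\<bar>+1) powr (1/b)) powr b < x powr b"
    proof (rule powr_less_mono2)
      have "(8*\<bar>C\<bar>+1) powr (1/b) > 0" by (simp add: add_nonneg_pos)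
      then show "0 \<le> (8*\<bar>C\<bar>+1) powr (1/b)" by linarith
    qed (use xgt bp in auto)
    then show ?thesis using bp by (simp add: powr_powr)
  qed
  define K :: nat where "K = j^2"
  have K1: "K \<ge> 1" unfolding K_def j_def by simp
  have Kx: "real K = x^2" unfolding K_def x_def by simp
  define h where "h = 1 / real K"
  have hp: "h > 0" and h1: "h \<le> 1" unfolding h_def using K1 by auto
  define lam :: "int \<Rightarrow> real" where "lam k = (if k \<le> 1 then real_of_int k - 1 else 1 + real_of_int (k-2) * h)" for k
  define t :: "nat \<Rightarrow> real" where "t n = (if n = 1 then x else 1)" for n
  define N where "N = K + 1"
  have sm: "strict_mono lam" unfolding strict_mono_def
  proof (intro allI impI)
    fix u v :: int assume uv: "u < v"
    show "lam u < lam v"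
    proof (cases "v \<le> 1")
      case True then show ?thesis using uv unfolding lam_def by simp
    next
      case False
      then have vv: "lam v = 1 + real_of_int (v-2) * h" "v \<ge> 2" unfolding lam_def by auto
      show ?thesis
      proof (cases "u \<le> 1")
        case True
        then have "lam u \<le> 0" unfolding lam_def by simp
        moreover have "real_of_int (v-2) * h \<ge> 0" using vv hp by simp
        ultimately show ?thesis using vv by simp
      next
        case False
        then have "lam u = 1 + real_of_int (u-2) * h" unfolding lam_def by simp
        moreover have "real_of_int (u-2) * h < real_of_int (v-2) * h"
          using uv hp by (intro mult_strict_right_mono) auto
        ultimately show ?thesis using vv by simp
      qed
    qed
  qed
  have tnn: "\<forall>n\<in>{1..N}. t n \<ge> 0" unfolding t_def using x1 by auto
  have g1: "gapdelta lam 1 = 1" unfolding gapdelta_def lam_def by simp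
  have gn: "gapdelta lam (int n) = h" if "n \<ge> 2" for n
  proof -
    have "lam (int n + 1) - lam (int n) = h" using that unfolding lam_def by (simp add: algebra_simps)
    moreover have "lam (int n) - lam (int n - 1) \<ge> h"
    proof (cases "n = 2")
      case True then show ?thesis using h1 unfolding lam_def by simp
    next
      case False then show ?thesis using that unfolding lam_def by (simp add: algebra_simps)
    qed
    ultimately show ?thesis unfolding gapdelta_def by simp
  qed
  have lamn: "1 \<le> lam (int n) \<and> lam (int n) \<le> 2" if "n \<in> {2..N}" for n
  proof -
    have l: "lam (int n) = 1 + real (n - 2) * h" using that unfolding lam_def by (simp add: of_nat_diff)
    have "real (n-2) \<le> real K" using that unfolding N_def by simp
    then have "real (n-2) * h \<le> 1" unfolding h_def using K1 by (simp add: divide_le_eq)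
    then show ?thesis using l hp by simp
  qed
  have lam1: "lam 1 = 0" unfolding lam_def by simp
  define F where "F m n = gapdelta lam (int m) powr (2 - \<alpha>) * gapdelta lam (int n) powr \<alpha> * t m * t n
            / (lam (int m) - lam (int n))^2" for m n
  have Fnn: "F m n \<ge> 0" if "m \<in> {1..N}" "n \<in> {1..N}" for m n
    unfolding F_def using term_nonneg[OF sm] tnn that by auto
  have Fb: "F 1 n \<ge> h powr \<alpha> * x / 4" if "n \<in> {2..N}" for n
  proof -
    have "F 1 n = h powr \<alpha> * x / (lam (int n))^2"
      unfolding F_def t_def using that g1 gn[of n] lam1 by simp
    moreover have "(lam (int n))^2 \<le> 4" using power_mono[of "lam (int n)" 2 2] lamn[OF that] by simp
    moreover have "(lam (int n))^2 > 0" using lamn[OF that] by simp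
    moreover have "h powr \<alpha> * x \<ge> 0" using x1 by simp
    ultimately show ?thesis using frac_le[of "h powr \<alpha> * x" "h powr \<alpha> * x" "(lam (int n))^2" 4] by simp
  qed
  have S: "SS \<alpha> N lam t \<le> C * (\<Sum>n\<in>{1..N}. (t n)^2)"
  proof -
    have "N \<ge> 1" unfolding N_def by simp
    then show ?thesis using A[unfolded adm_iff, rule_format, of N lam t] sm tnn by blast
  qed
  have "SS \<alpha> N lam t = (\<Sum>m\<in>{1..N}. \<Sum>n\<in>{1..N}-{m}. F m n)" unfolding SS_def F_def ..
  also have "\<dots> \<ge> (\<Sum>n\<in>{1..N}-{1}. F 1 n)"
    by (rule member_le_sum[of 1 "{1..N}" "\<lambda>m. \<Sum>n\<in>{1..N}-{m}. F m n"])
       (auto simp: N_def intro!: sum_nonneg Fnn)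
  moreover have "(\<Sum>n\<in>{1..N}-{1}. F 1 n) = (\<Sum>n\<in>{2..N}. F 1 n)"
  proof -
    have "{1..N}-{1} = {2..N}" by auto
    then show ?thesis by simp
  qed
  moreover have "(\<Sum>n\<in>{2..N}. F 1 n) \<ge> (\<Sum>n\<in>{2..N}. h powr \<alpha> * x / 4)"
    by (rule sum_mono) (rule Fb)
  moreover have "(\<Sum>n\<in>{2..N}. h powr \<alpha> * x / 4) = real K * (h powr \<alpha> * x / 4)"
    unfolding N_def by simp
  ultimately have lo: "real K * (h powr \<alpha> * x / 4) \<le> SS \<alpha> N lam t" by linarith
  have "(\<Sum>n\<in>{1..N}. (t n)^2) = (t 1)^2 + (\<Sum>n\<in>{Suc 1..N}. (t n)^2)"
    unfolding N_def by (rule sum.atLeast_Suc_atMost) simp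
  also have "\<dots> = x^2 + real K" unfolding t_def N_def by simp
  finally have T: "(\<Sum>n\<in>{1..N}. (t n)^2) = 2 * real K" using Kx by simp
  have "real K * (h powr \<alpha> * x / 4) \<le> C * (2 * real K)" using lo S T by simp
  then have "h powr \<alpha> * x \<le> 8 * C" using K1 by (simp add: field_simps)
  moreover have "h powr \<alpha> * x = x powr b"
  proof -
    have "h = x powr (-2)" unfolding h_def Kx using x1 by (simp add: powr_minus powr_realpow divide_inverse)
    then have "h powr \<alpha> * x = x powr (-2*\<alpha>) * x powr 1" using x1 by (simp add: powr_powr)
    also have "\<dots> = x powr b"
    proof -
      have "x powr b = x powr (-2*\<alpha>) * x powr 1" unfolding b_def
        by (simp only: powr_add[symmetric]) simp
      then show ?thesis by simp
    qed
    finally show ?thesis .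
  qed
  ultimately show False using xb by simp
qed


lemma adm_mono:
  assumes "0 \<le> a1" "a1 < a2" "a2 \<le> 1" and A: "admissible_const a1 C"
  shows "admissible_const a2 C"
proof -
  define \<theta> where "\<theta> = (2-a1-a2)/(2-2*a1)"
  have d: "2 - 2*a1 > 0" using assms by simp
  have th: "0 < \<theta>" "\<theta> < 1" unfolding \<theta>_def using assms d by (auto simp: divide_less_eq)
  have C1: "C \<ge> 1" by (rule adm_ge1[OF A])
  have B: "admissible_const (2 - a1) C" using adm_sym[of a1 C] A by blast
  have "admissible_const (\<theta>*a1+(1-\<theta>)*(2-a1)) (C powr \<theta> * C powr (1-\<theta>))"
    by (rule adm_interp[OF A B _ _ th]) (use C1 in auto)
  moreover have "\<theta>*a1+(1-\<theta>)*(2-a1) = a2"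
  proof -
    have e: "\<theta>*(2-2*a1) = 2-a1-a2" unfolding \<theta>_def using d by simp
    have "\<theta>*a1+(1-\<theta>)*(2-a1) = (2-a1) - \<theta>*(2-2*a1)" by (simp add: algebra_simps)
    then show ?thesis using e by simp
  qed
  moreover have "C powr \<theta> * C powr (1-\<theta>) = C" using C1 by (simp add: powr_add[symmetric])
  ultimately show ?thesis by simp
qed

lemma Cbar_mono:
  assumes "0 \<le> a1" "a1 < a2" "a2 \<le> 1"
  shows "Cbar a2 \<le> Cbar a1"
  unfolding Cbar_def
proof (rule Inf_superset_mono, rule image_mono)
  show "{C. admissible_const a1 C} \<subseteq> {C. admissible_const a2 C}" using adm_mono[OF assms] by blast
qed

theorem theorem3:
  shows "(\<forall>\<alpha>::real. 0 \<le> \<alpha> \<and> \<alpha> \<le> 2 \<longrightarrow> Cbar \<alpha> = Cbar (2 - \<alpha>) \<and> Cbar \<alpha> > 0)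
    \<and> (\<forall>\<alpha>1 \<alpha>2 \<theta>::real. 0 \<le> \<alpha>1 \<and> \<alpha>1 < \<alpha>2 \<and> \<alpha>2 \<le> 2 \<and> 0 < \<theta> \<and> \<theta> < 1 \<longrightarrow>
          Cbar \<alpha>1 = \<infinity> \<or> Cbar \<alpha>2 = \<infinity> \<or>
          Cbar (\<theta> * \<alpha>1 + (1 - \<theta>) * \<alpha>2)
            \<le> ereal (real_of_ereal (Cbar \<alpha>1) powr \<theta> * real_of_ereal (Cbar \<alpha>2) powr (1 - \<theta>)))
    \<and> (\<forall>\<alpha>1 \<alpha>2::real. 0 \<le> \<alpha>1 \<and> \<alpha>1 < \<alpha>2 \<and> \<alpha>2 \<le> 1 \<longrightarrow> Cbar \<alpha>1 \<ge> Cbar \<alpha>2)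
    \<and> (\<forall>\<alpha>::real. 0 \<le> \<alpha> \<and> \<alpha> \<le> 2 \<longrightarrow> Cbar 1 \<le> Cbar \<alpha>)
    \<and> (\<forall>\<alpha>::real. 0 \<le> \<alpha> \<and> \<alpha> < 1/2 \<longrightarrow> Cbar \<alpha> = \<infinity>)"
proof (intro conjI allI impI)
  fix \<alpha> :: real
  show "Cbar \<alpha> = Cbar (2 - \<alpha>)" by (rule Cbar_sym)
  have "(0::ereal) < 1" by simp
  then show "Cbar \<alpha> > 0" using Cbar_ge1[of \<alpha>] by (rule less_le_trans)
next
  fix a1 a2 \<theta> :: real
  assume h: "0 \<le> a1 \<and> a1 < a2 \<and> a2 \<le> 2 \<and> 0 < \<theta> \<and> \<theta> < 1"
  show "Cbar a1 = \<infinity> \<or> Cbar a2 = \<infinity> \<or>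
          Cbar (\<theta> * a1 + (1 - \<theta>) * a2)
            \<le> ereal (real_of_ereal (Cbar a1) powr \<theta> * real_of_ereal (Cbar a2) powr (1 - \<theta>))"
  proof (cases "Cbar a1 = \<infinity> \<or> Cbar a2 = \<infinity>")
    case False
    then have f1: "Cbar a1 \<noteq> \<infinity>" and f2: "Cbar a2 \<noteq> \<infinity>" by auto
    define c1 where "c1 = real_of_ereal (Cbar a1)"
    define c2 where "c2 = real_of_ereal (Cbar a2)"
    have A1: "admissible_const a1 c1" using Cbar_attained[OF f1] unfolding c1_def by simp
    have A2: "admissible_const a2 c2" using Cbar_attained[OF f2] unfolding c2_def by simp
    have "admissible_const (\<theta> * a1 + (1 - \<theta>) * a2) (c1 powr \<theta> * c2 powr (1-\<theta>))"
      by (rule adm_interp[OF A1 A2]) (use adm_ge1[OF A1] adm_ge1[OF A2] h in auto)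
    then have "Cbar (\<theta> * a1 + (1 - \<theta>) * a2) \<le> ereal (c1 powr \<theta> * c2 powr (1-\<theta>))"
      unfolding Cbar_def by (intro Inf_lower) auto
    then show ?thesis unfolding c1_def c2_def by simp
  qed blast
next
  fix a1 a2 :: real
  assume "0 \<le> a1 \<and> a1 < a2 \<and> a2 \<le> 1"
  then show "Cbar a2 \<le> Cbar a1" using Cbar_mono by blast
next
  fix \<alpha> :: real
  assume h: "0 \<le> \<alpha> \<and> \<alpha> \<le> 2"
  show "Cbar 1 \<le> Cbar \<alpha>"
  proof (cases "\<alpha> < 1")
    case True then show ?thesis using Cbar_mono[of \<alpha> 1] h by simp
  next
    case False
    show ?thesis
    proof (cases "\<alpha> = 1")
      case False
      then have "2 - \<alpha> < 1" using \<open>\<not> \<alpha> < 1\<close> by simp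
      then have "Cbar 1 \<le> Cbar (2 - \<alpha>)" using Cbar_mono[of "2-\<alpha>" 1] h by simp
      then show ?thesis using Cbar_sym[of \<alpha>] by simp
    qed simp
  qed
next
  fix \<alpha> :: real
  assume h: "0 \<le> \<alpha> \<and> \<alpha> < 1/2"
  then have "{C. admissible_const \<alpha> C} = {}" using no_adm by blast
  then have "Cbar \<alpha> = Inf (ereal ` {})" unfolding Cbar_def by (simp only:)
  then show "Cbar \<alpha> = \<infinity>" by (simp add: top_ereal_def)
qed

end
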